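(* Let $(A;R)\in\mathcal C$ and let $F_1,\dots,F_r$ ($r\ge1$) be distinct closed sets of $PG(A;R)$, with $U=\bigcup_{i=1}^rF_i$. Let $\rho(F_1,\dots,F_r)$ be the number of $s\in R$ with $s\subseteq U$ but $s\not\subseteq F_i$ for every $i$. Then $$-\Delta(F_1,\dots,F_r)=\delta(U)-d(U)+\rho(F_1,\dots,F_r).$$ Consequently $\Delta(F_1,\dots,F_r)\le0$, and $\Delta(F_1,\dots,F_r)=0$ if and only if $U\le A$ and every $s\in R$ with $s\subseteq U$ is contained in some $F_i$.
   Context: A set system is a pair $(A;R)$ where $R$ is a set of finite non-empty subsets of $A$; for $X\subseteq A$, $R[X]=\{s\in R: s\subseteq X\}$ and $\delta(X)=|X|-|R[X]|$. $\mathcal C$ is the class of finite set systems with $\delta(X)\ge0$ for all $X\subseteq A$. $X\le A$ means $\delta(X)\le\delta(X')$ for all $X\subseteq X'\subseteq A$. Define $d(X)=\min\{\delta(Y):X\subseteq Y\subseteq A\}$ and $\mathrm{cl}(X)=\{y: d(X\cup\{y\})=d(X)\}$; $PG(A;R)$ is the pregeometry $(A,\mathrm{cl})$ with dimension function $d$; closed sets are $F$ with $\mathrm{cl}(F)=F$. For a family $F_i$ ($i\in I=\{1,\dots,r\}$) of distinct closed sets, put $F_S=\bigcap_{i\in S}F_i$ for $\emptyset\neq S\subseteq I$, $F_\emptyset=\bigcup_iF_i$, and $\Delta(F_1,\dots,F_r)=\sum_{S\subseteq I}(-1)^{|S|}d(F_S)$. *)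

theory Defs
  imports Main
begin

definition set_system :: "'a set \<Rightarrow> 'a set set \<Rightarrow> bool" where
  "set_system A R \<longleftrightarrow> (\<forall>s\<in>R. finite s \<and> s \<noteq> {} \<and> s \<subseteq> A)"

definition Rof :: "'a set set \<Rightarrow> 'a set \<Rightarrow> 'a set set" where
  "Rof R X = {s \<in> R. s \<subseteq> X}"

definition delta :: "'a set set \<Rightarrow> 'a set \<Rightarrow> int" where
  "delta R X = int (card X) - int (card (Rof R X))"

definition inC :: "'a set \<Rightarrow> 'a set set \<Rightarrow> bool" where
  "inC A R \<longleftrightarrow> finite A \<and> set_system A R \<and> (\<forall>X. X \<subseteq> A \<longrightarrow> delta R X \<ge> 0)"

definition selfsuff :: "'a set \<Rightarrow> 'a set set \<Rightarrow> 'a set \<Rightarrow> bool" where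
  "selfsuff A R X \<longleftrightarrow> (\<forall>X'. X \<subseteq> X' \<and> X' \<subseteq> A \<longrightarrow> delta R X \<le> delta R X')"

definition dim :: "'a set \<Rightarrow> 'a set set \<Rightarrow> 'a set \<Rightarrow> int" where
  "dim A R X = Min {delta R Y | Y. X \<subseteq> Y \<and> Y \<subseteq> A}"

definition cl :: "'a set \<Rightarrow> 'a set set \<Rightarrow> 'a set \<Rightarrow> 'a set" where
  "cl A R X = {y \<in> A. dim A R (insert y X) = dim A R X}"

definition closed_set :: "'a set \<Rightarrow> 'a set set \<Rightarrow> 'a set \<Rightarrow> bool" where
  "closed_set A R F \<longleftrightarrow> F \<subseteq> A \<and> cl A R F = F"

definition FS :: "nat set \<Rightarrow> (nat \<Rightarrow> 'a set) \<Rightarrow> nat set \<Rightarrow> 'a set" where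
  "FS I F S = (if S = {} then (\<Union>i\<in>I. F i) else (\<Inter>i\<in>S. F i))"

definition Delta :: "'a set \<Rightarrow> 'a set set \<Rightarrow> nat \<Rightarrow> (nat \<Rightarrow> 'a set) \<Rightarrow> int" where
  "Delta A R r F = (\<Sum>S\<in>Pow {1..r}. (-1) ^ card S * dim A R (FS {1..r} F S))"

definition rho :: "'a set set \<Rightarrow> nat \<Rightarrow> (nat \<Rightarrow> 'a set) \<Rightarrow> nat" where
  "rho R r F = card {s \<in> R. s \<subseteq> (\<Union>i\<in>{1..r}. F i) \<and> (\<forall>i\<in>{1..r}. \<not> s \<subseteq> F i)}"

end

theory Submission
  imports Defs
begin

lemma finR: "inC A R \<Longrightarrow> finite R"
  unfolding inC_def set_system_def
  by (meson Pow_iff finite_Pow_iff finite_subset subsetI)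

lemma dim_le:
  assumes "finite A" "X \<subseteq> Y" "Y \<subseteq> A"
  shows "dim A R X \<le> delta R Y"
proof -
  have "finite {delta R Y | Y. X \<subseteq> Y \<and> Y \<subseteq> A}"
    using assms(1) by (simp add: setcompr_eq_image)
  then show ?thesis unfolding dim_def using assms by (intro Min_le) auto
qed

lemma dim_ex:
  assumes "finite A" "X \<subseteq> A"
  shows "\<exists>Y. X \<subseteq> Y \<and> Y \<subseteq> A \<and> dim A R X = delta R Y"
proof -
  have f: "finite {delta R Y | Y. X \<subseteq> Y \<and> Y \<subseteq> A}"
    using assms(1) by (simp add: setcompr_eq_image)
  have ne: "{delta R Y | Y. X \<subseteq> Y \<and> Y \<subseteq> A} \<noteq> {}" using assms by auto
  from Min_in[OF f ne] obtain Y where "Min {delta R Y | Y. X \<subseteq> Y \<and> Y \<subseteq> A} = delta R Y" "X \<subseteq> Y" "Y \<subseteq> A"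
    by blast
  then show ?thesis unfolding dim_def by blast
qed

lemma dim_mono:
  assumes "finite A" "X \<subseteq> X'" "X' \<subseteq> A"
  shows "dim A R X \<le> dim A R X'"
proof -
  obtain Y where "X' \<subseteq> Y" "Y \<subseteq> A" "dim A R X' = delta R Y" using dim_ex[OF assms(1,3), of R] by blast
  then show ?thesis using dim_le[of A X Y R] assms by simp
qed

lemma selfsuff_dim:
  assumes "finite A" "X \<subseteq> A"
  shows "selfsuff A R X \<longleftrightarrow> dim A R X = delta R X"
proof
  assume "selfsuff A R X"
  then show "dim A R X = delta R X"
  proof -
    obtain Y where Y: "X \<subseteq> Y" "Y \<subseteq> A" "dim A R X = delta R Y" using dim_ex[OF assms, of R] by blast
    have "delta R X \<le> delta R Y" using \<open>selfsuff A R X\<close> Y unfolding selfsuff_def by blast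
    then show ?thesis using dim_le[OF assms(1) order_refl assms(2), of R] Y(3) by linarith
  qed
next
  assume "dim A R X = delta R X"
  then show "selfsuff A R X" unfolding selfsuff_def using dim_le[OF assms(1), of X _ R] by fastforce
qed

lemma closed_selfsuff:
  assumes "finite A" "closed_set A R F"
  shows "selfsuff A R F"
proof -
  have FA: "F \<subseteq> A" using assms unfolding closed_set_def by auto
  obtain Y where Y: "F \<subseteq> Y" "Y \<subseteq> A" "dim A R F = delta R Y" using dim_ex[OF assms(1) FA] by blast
  have "Y \<subseteq> F"
  proof
    fix y assume "y \<in> Y"
    then have "dim A R (insert y F) \<le> delta R Y" using Y dim_le[OF assms(1), of "insert y F" Y R] by simp
    moreover have "dim A R F \<le> dim A R (insert y F)"
      using dim_mono[OF assms(1), of F "insert y F" R] \<open>y \<in> Y\<close> Y by (meson insert_subset subset_iff subset_insertI)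
    ultimately have "dim A R (insert y F) = dim A R F" using Y(3) by linarith
    moreover have "y \<in> A" using Y \<open>y \<in> Y\<close> by blast
    ultimately have "y \<in> cl A R F" unfolding cl_def mem_Collect_eq by (intro conjI)
    moreover have "cl A R F = F" using assms(2) unfolding closed_set_def by blast
    ultimately show "y \<in> F" by simp
  qed
  then have "Y = F" using Y(1) by (rule equalityI)
  then have "dim A R F = delta R F" using Y(3) by simp
  then show ?thesis using selfsuff_dim[OF assms(1) FA, of R] by (rule iffD2[rotated])
qed

lemma submod:
  assumes "finite A" "finite R" "X \<subseteq> A" "Y \<subseteq> A"
  shows "delta R (X \<union> Y) + delta R (X \<inter> Y) \<le> delta R X + delta R Y"
proof -
  have fx: "finite X" "finite Y" using assms finite_subset by auto
  have c1: "card X + card Y = card (X \<union> Y) + card (X \<inter> Y)" using card_Un_Int fx by blast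
  have fr: "finite (Rof R Z)" for Z using assms(2) unfolding Rof_def by auto
  have c2: "card (Rof R X) + card (Rof R Y) = card (Rof R X \<union> Rof R Y) + card (Rof R X \<inter> Rof R Y)"
    using card_Un_Int fr by blast
  have "card (Rof R X \<union> Rof R Y) \<le> card (Rof R (X \<union> Y))"
    by (rule card_mono[OF fr]) (auto simp: Rof_def)
  moreover have "Rof R X \<inter> Rof R Y = Rof R (X \<inter> Y)" by (auto simp: Rof_def)
  ultimately have "card (Rof R X) + card (Rof R Y) \<le> card (Rof R (X \<union> Y)) + card (Rof R (X \<inter> Y))"
    using c2 by simp
  then have i2: "int (card (Rof R X)) + int (card (Rof R Y)) \<le> int (card (Rof R (X \<union> Y))) + int (card (Rof R (X \<inter> Y)))"
    by linarith
  have i1: "int (card X) + int (card Y) = int (card (X \<union> Y)) + int (card (X \<inter> Y))"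
    using c1 by (metis of_nat_add)
  show ?thesis using i1 i2 unfolding delta_def by linarith
qed

lemma selfsuff_Int:
  assumes "finite A" "finite R" "X \<subseteq> A" "Y \<subseteq> A" "selfsuff A R X" "selfsuff A R Y"
  shows "selfsuff A R (X \<inter> Y)"
  unfolding selfsuff_def
proof (intro allI impI)
  fix Z assume Z: "X \<inter> Y \<subseteq> Z \<and> Z \<subseteq> A"
  have ZA: "Z \<subseteq> A" and XYZ: "X \<inter> Y \<subseteq> Z" using Z by simp_all
  have YZA: "Y \<union> Z \<subseteq> A" using assms(4) ZA by (rule Un_least)
  have YZA': "Y \<inter> Z \<subseteq> A" using ZA by (rule le_infI2)
  have XYZA: "X \<union> (Y \<inter> Z) \<subseteq> A" using assms(3) YZA' by (rule Un_least)
  have s1: "delta R (Y \<union> Z) + delta R (Y \<inter> Z) \<le> delta R Y + delta R Z"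
    by (rule submod[OF assms(1,2) assms(4) ZA])
  have s2: "delta R (X \<union> (Y \<inter> Z)) + delta R (X \<inter> (Y \<inter> Z)) \<le> delta R X + delta R (Y \<inter> Z)"
    by (rule submod[OF assms(1,2) assms(3) YZA'])
  have t1: "delta R Y \<le> delta R (Y \<union> Z)"
    using assms(6) YZA unfolding selfsuff_def by (meson Un_upper1)
  have t2: "delta R X \<le> delta R (X \<union> (Y \<inter> Z))"
    using assms(5) XYZA unfolding selfsuff_def by (meson Un_upper1)
  have e: "X \<inter> (Y \<inter> Z) = X \<inter> Y" using XYZ by blast
  show "delta R (X \<inter> Y) \<le> delta R Z" using s1 s2 t1 t2 unfolding e by linarith
qed

lemma selfsuff_Inter:
  assumes "finite A" "finite R" "finite S" "S \<noteq> {}" "\<forall>i\<in>S. F i \<subseteq> A \<and> selfsuff A R (F i)"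
  shows "selfsuff A R (\<Inter>(F ` S)) \<and> \<Inter>(F ` S) \<subseteq> A"
  using assms(3,4,5)
proof (induction S rule: finite_ne_induct)
  case (singleton x) then show ?case by auto
next
  case (insert x S)
  then have "F x \<subseteq> A" "selfsuff A R (F x)" "selfsuff A R (\<Inter>(F ` S))" "\<Inter>(F ` S) \<subseteq> A" by simp_all
  then show ?case using selfsuff_Int[OF assms(1,2), of "F x" "\<Inter>(F ` S)"] by auto
qed

theorem mainTheorem7:
  fixes A :: "'a set" and R :: "'a set set" and r :: nat and F :: "nat \<Rightarrow> 'a set"
  assumes "inC A R"
    and "r \<ge> 1"
    and "\<forall>i\<in>{1..r}. closed_set A R (F i)"
    and "inj_on F {1..r}"
  defines "U \<equiv> \<Union>i\<in>{1..r}. F i"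
  shows "- Delta A R r F = delta R U - dim A R U + int (rho R r F)
     \<and> Delta A R r F \<le> 0
     \<and> (Delta A R r F = 0 \<longleftrightarrow>
          (selfsuff A R U \<and> (\<forall>s\<in>R. s \<subseteq> U \<longrightarrow> (\<exists>i\<in>{1..r}. s \<subseteq> F i))))"
proof -
  define I where "I = {1..r}"
  define P where "P = {B. B \<subseteq> I \<and> B \<noteq> {}}"
  define G where "G = (\<lambda>i. Rof R (F i))"
  have fA: "finite A" using assms(1) unfolding inC_def by blast
  have fR: "finite R" using finR[OF assms(1)] .
  have fI: "finite I" unfolding I_def by simp
  have FiA: "\<forall>i\<in>I. F i \<subseteq> A \<and> selfsuff A R (F i)"
    using assms(3) closed_selfsuff[OF fA] unfolding I_def closed_set_def by blast
  have UA: "U \<subseteq> A" using FiA unfolding U_def I_def by blast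
  have key: "dim A R (FS I F S) = int (card (\<Inter>(F ` S) \<inter> A)) - int (card (\<Inter>(G ` S) \<inter> R))"
    if S: "S \<in> P" for S
  proof -
    have S1: "S \<subseteq> I" "S \<noteq> {}" using S unfolding P_def by auto
    have fS: "finite S" using S1(1) fI finite_subset by blast
    have FSe: "FS I F S = \<Inter>(F ` S)" unfolding FS_def using S1 by simp
    have ss: "selfsuff A R (\<Inter>(F ` S)) \<and> \<Inter>(F ` S) \<subseteq> A"
      using selfsuff_Inter[OF fA fR fS S1(2)] FiA S1(1) by blast
    then have "dim A R (\<Inter>(F ` S)) = delta R (\<Inter>(F ` S))"
      using selfsuff_dim[OF fA] by blast
    moreover have "Rof R (\<Inter>(F ` S)) = \<Inter>(G ` S) \<inter> R"
      unfolding G_def Rof_def using S1(2) by auto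
    moreover have "\<Inter>(F ` S) \<inter> A = \<Inter>(F ` S)" using ss by blast
    ultimately show ?thesis unfolding FSe delta_def by simp
  qed
  have addA: "int (card ((X \<union> Y) \<inter> A)) = int (card (X \<inter> A)) + int (card (Y \<inter> A))"
    if "disjnt X Y" for X Y
  proof -
    have "(X \<union> Y) \<inter> A = (X \<inter> A) \<union> (Y \<inter> A)" by blast
    moreover have "card ((X \<inter> A) \<union> (Y \<inter> A)) = card (X \<inter> A) + card (Y \<inter> A)"
      by (rule card_Un_disjoint) (use fA that in \<open>auto simp: disjnt_def\<close>)
    ultimately show ?thesis by simp
  qed
  have addR: "int (card ((X \<union> Y) \<inter> R)) = int (card (X \<inter> R)) + int (card (Y \<inter> R))"
    if "disjnt X Y" for X Y
  proof -
    have "(X \<union> Y) \<inter> R = (X \<inter> R) \<union> (Y \<inter> R)" by blast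
    moreover have "card ((X \<inter> R) \<union> (Y \<inter> R)) = card (X \<inter> R) + card (Y \<inter> R)"
      by (rule card_Un_disjoint) (use fR that in \<open>auto simp: disjnt_def\<close>)
    ultimately show ?thesis by simp
  qed
  have IE1: "int (card (\<Union>(F ` I) \<inter> A)) = (\<Sum>B\<in>P. (-1) ^ (card B + 1) * int (card (\<Inter>(F ` B) \<inter> A)))"
    unfolding P_def using Incl_Excl_UN[of "\<lambda>X. int (card (X \<inter> A))" I F] addA fI by blast
  have IE2: "int (card (\<Union>(G ` I) \<inter> R)) = (\<Sum>B\<in>P. (-1) ^ (card B + 1) * int (card (\<Inter>(G ` B) \<inter> R)))"
    unfolding P_def using Incl_Excl_UN[of "\<lambda>X. int (card (X \<inter> R))" I G] addR fI by blast
  have UI: "\<Union>(F ` I) = U" unfolding U_def I_def by simp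
  have GR: "\<Union>(G ` I) \<inter> R = \<Union>(G ` I)" unfolding G_def Rof_def by blast
  have GU: "\<Union>(G ` I) \<subseteq> Rof R U" unfolding G_def Rof_def U_def I_def by blast
  have PowI: "Pow I = insert {} P" unfolding P_def by blast
  have fP: "finite P" unfolding P_def using fI by simp
  have FS0: "FS I F {} = U" unfolding FS_def U_def I_def by simp
  have "Delta A R r F = (\<Sum>S\<in>insert {} P. (-1) ^ card S * dim A R (FS I F S))"
    unfolding Delta_def PowI[unfolded I_def, symmetric] I_def ..
  also have "\<dots> = dim A R U + (\<Sum>S\<in>P. (-1) ^ card S * dim A R (FS I F S))"
    using fP FS0 by (simp add: P_def)
  also have "(\<Sum>S\<in>P. (-1) ^ card S * dim A R (FS I F S))
      = (\<Sum>S\<in>P. (-1) ^ (card S + 1) * int (card (\<Inter>(G ` S) \<inter> R)) - (-1) ^ (card S + 1) * int (card (\<Inter>(F ` S) \<inter> A)))"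
    by (rule sum.cong) (simp_all add: key algebra_simps)
  also have "\<dots> = int (card (\<Union>(G ` I))) - int (card U)"
    unfolding sum_subtractf IE1[symmetric] IE2[symmetric] GR UI using UA
    by (simp add: Int_absorb2)
  finally have D: "Delta A R r F = dim A R U + int (card (\<Union>(G ` I))) - int (card U)" by simp
  have rhoset: "{s \<in> R. s \<subseteq> (\<Union>i\<in>{1..r}. F i) \<and> (\<forall>i\<in>{1..r}. \<not> s \<subseteq> F i)} = Rof R U - \<Union>(G ` I)"
    unfolding G_def Rof_def U_def I_def by blast
  have fRU: "finite (Rof R U)" using fR unfolding Rof_def by simp
  have rh: "int (rho R r F) = int (card (Rof R U)) - int (card (\<Union>(G ` I)))"
    unfolding rho_def rhoset using card_Diff_subset[OF finite_subset[OF GU fRU] GU] card_mono[OF fRU GU]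
    by simp
  have E: "- Delta A R r F = delta R U - dim A R U + int (rho R r F)"
    unfolding D rh delta_def by simp
  have dle: "dim A R U \<le> delta R U" using dim_le[OF fA order_refl UA] .
  have rnn: "int (rho R r F) \<ge> 0" by simp
  have iff1: "rho R r F = 0 \<longleftrightarrow> (\<forall>s\<in>R. s \<subseteq> U \<longrightarrow> (\<exists>i\<in>{1..r}. s \<subseteq> F i))"
  proof -
    have fin: "finite {s \<in> R. s \<subseteq> (\<Union>i\<in>{1..r}. F i) \<and> (\<forall>i\<in>{1..r}. \<not> s \<subseteq> F i)}"
      using fR by simp
    show ?thesis unfolding rho_def card_eq_0_iff using fin unfolding U_def by blast
  qed
  have "Delta A R r F = 0 \<longleftrightarrow> (dim A R U = delta R U \<and> rho R r F = 0)"
    using E dle rnn by linarith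
  then show ?thesis using E dle rnn iff1 selfsuff_dim[OF fA UA, of R] by linarith
qed

end
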